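(* Let $p,q,r,s\in\mathbb{C}$ with $r\neq s^2$, $q\neq s^3$, or $p\neq s^4$, and let $\delta$ be the rational space quartic in $\mathbb{C}\mathbb{P}^3$ parametrised by $t\mapsto[t^4-p,\,t^3+q,\,t^2-r,\,t+s]$, and suppose $\delta$ is of the first species. Identify $\mathbb{C}\mathbb{P}^1$ with $\mathbb{C}\cup\{\infty\}$. If $\delta$ is nodal, then there exists a parametrisation $\varphi:\mathbb{C}\mathbb{P}^1\to\delta$ such that $\varphi(0)=\varphi(\infty)$ is the node of $\delta$, and any four points $\varphi(t_1),\varphi(t_2),\varphi(t_3),\varphi(t_4)$ on $\delta\setminus\{\varphi(0)\}$ are coplanar if and only if $t_1t_2t_3t_4=1$. If $\delta$ is cuspidal, then there exists a parametrisation $\varphi:\mathbb{C}\mathbb{P}^1\to\delta$ such that $\varphi(\infty)$ is the cusp of $\delta$, and any four points $\varphi(t_1),\varphi(t_2),\varphi(t_3),\varphi(t_4)$ on $\delta\setminus\{\varphi(\infty)\}$ are coplanar if and only if $t_1+t_2+t_3+t_4=0$.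
   Context: A space quartic is an irreducible non-planar curve of degree $4$ in $\mathbb{C}\mathbb{P}^3$; it is of the first species if it is contained in more than one quadric surface. A rational space quartic of the first species has exactly one singular point, which is either a node or a cusp. *)

theory Defs
  imports "HOL-Computational_Algebra.Polynomial"
begin

text \<open>Points of C^4 (lifts of points of CP^3) are functions nat => complex, of which
only the coordinates 0..3 matter.  CP^1 is identified with C + {infinity} via the
type complex option (None = infinity).  A morphism CP^1 -> CP^3 is given by four
binary forms of a common degree d; a binary form of degree d is encoded by a
univariate polynomial P of degree at most d via (u,v) |-> sum_i coeff P i u^i v^(d-i).\<close>

type_synonym pt4 = "nat \<Rightarrow> complex"
type_synonym bmap = "nat \<times> (nat \<Rightarrow> complex poly)"

definition bform :: "nat \<Rightarrow> complex poly \<Rightarrow> complex \<Rightarrow> complex \<Rightarrow> complex" where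
  "bform d P u v = (\<Sum>i\<le>d. coeff P i * u ^ i * v ^ (d - i))"

definition bform_du :: "nat \<Rightarrow> complex poly \<Rightarrow> complex \<Rightarrow> complex \<Rightarrow> complex" where
  "bform_du d P u v = (\<Sum>i\<le>d. of_nat i * coeff P i * u ^ (i - 1) * v ^ (d - i))"

definition bform_dv :: "nat \<Rightarrow> complex poly \<Rightarrow> complex \<Rightarrow> complex \<Rightarrow> complex" where
  "bform_dv d P u v = (\<Sum>i\<le>d. of_nat (d - i) * coeff P i * u ^ i * v ^ (d - i - 1))"

fun lift1 :: "complex option \<Rightarrow> complex \<times> complex" where
  "lift1 (Some t) = (t, 1)"
| "lift1 None = (1, 0)"

definition evalm :: "bmap \<Rightarrow> complex option \<Rightarrow> pt4" where
  "evalm m z = (\<lambda>j. bform (fst m) (snd m j) (fst (lift1 z)) (snd (lift1 z)))"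

definition evalm_du :: "bmap \<Rightarrow> complex option \<Rightarrow> pt4" where
  "evalm_du m z = (\<lambda>j. bform_du (fst m) (snd m j) (fst (lift1 z)) (snd (lift1 z)))"

definition evalm_dv :: "bmap \<Rightarrow> complex option \<Rightarrow> pt4" where
  "evalm_dv m z = (\<lambda>j. bform_dv (fst m) (snd m j) (fst (lift1 z)) (snd (lift1 z)))"

definition peq :: "pt4 \<Rightarrow> pt4 \<Rightarrow> bool" where
  "peq x y \<longleftrightarrow> (\<exists>c. c \<noteq> 0 \<and> (\<forall>j<4. x j = c * y j))"

definition lin_indep2 :: "pt4 \<Rightarrow> pt4 \<Rightarrow> bool" where
  "lin_indep2 x y \<longleftrightarrow> \<not> (\<exists>a b. (a, b) \<noteq> (0, 0) \<and> (\<forall>j<4. a * x j + b * y j = 0))"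

definition in_span2 :: "pt4 \<Rightarrow> pt4 \<Rightarrow> pt4 \<Rightarrow> bool" where
  "in_span2 x a b \<longleftrightarrow> (\<exists>c1 c2. \<forall>j<4. x j = c1 * a j + c2 * b j)"

definition is_bmap :: "bmap \<Rightarrow> bool" where
  "is_bmap m \<longleftrightarrow> (\<forall>j<4. degree (snd m j) \<le> fst m) \<and> (\<forall>z. \<exists>j<4. evalm m z j \<noteq> 0)"

definition curve_img :: "bmap \<Rightarrow> pt4 set" where
  "curve_img m = {x. \<exists>z. peq x (evalm m z)}"

text \<open>A parametrisation of the curve C: a birational (i.e. generically injective)
morphism from CP^1 onto C.\<close>
definition is_param :: "pt4 set \<Rightarrow> bmap \<Rightarrow> bool" where
  "is_param C m \<longleftrightarrow> is_bmap m \<and> curve_img m = C \<and>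
     (\<exists>F. finite F \<and> (\<forall>z w. z \<notin> F \<and> w \<notin> F \<and> peq (evalm m z) (evalm m w) \<longrightarrow> z = w))"

text \<open>The map is unramified (an immersion) at z: the differential has rank 2 on the cone.\<close>
definition unram :: "bmap \<Rightarrow> complex option \<Rightarrow> bool" where
  "unram m z \<longleftrightarrow> lin_indep2 (evalm_du m z) (evalm_dv m z)"

text \<open>Ordinary node of the image curve (w.r.t. the normalisation m): exactly two
preimages, two smooth branches with distinct tangent lines.\<close>
definition is_node :: "bmap \<Rightarrow> pt4 \<Rightarrow> bool" where
  "is_node m x \<longleftrightarrow> (\<exists>a b. a \<noteq> b \<and> {z. peq (evalm m z) x} = {a, b} \<and>
      unram m a \<and> unram m b \<and>
      \<not> (in_span2 (evalm_du m b) (evalm_du m a) (evalm_dv m a) \<and>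
         in_span2 (evalm_dv m b) (evalm_du m a) (evalm_dv m a)))"

text \<open>Cusp of the image curve: a unibranch singular point, i.e. exactly one preimage,
at which the normalisation is ramified.\<close>
definition is_cusp :: "bmap \<Rightarrow> pt4 \<Rightarrow> bool" where
  "is_cusp m x \<longleftrightarrow> (\<exists>a. {z. peq (evalm m z) x} = {a} \<and> \<not> unram m a)"

definition qform :: "(nat \<Rightarrow> nat \<Rightarrow> complex) \<Rightarrow> pt4 \<Rightarrow> complex" where
  "qform A x = (\<Sum>i<4. \<Sum>j\<in>{i..<4}. A i j * x i * x j)"

definition qforms_indep :: "(nat \<Rightarrow> nat \<Rightarrow> complex) \<Rightarrow> (nat \<Rightarrow> nat \<Rightarrow> complex) \<Rightarrow> bool" where
  "qforms_indep A B \<longleftrightarrow> \<not> (\<exists>a b. (a, b) \<noteq> (0, 0) \<and>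
      (\<forall>i j. i \<le> j \<and> j < 4 \<longrightarrow> a * A i j + b * B i j = 0))"

text \<open>First species: the curve lies on (at least) two distinct quadric surfaces.\<close>
definition first_species :: "pt4 set \<Rightarrow> bool" where
  "first_species C \<longleftrightarrow> (\<exists>A B. qforms_indep A B \<and> (\<forall>x\<in>C. qform A x = 0 \<and> qform B x = 0))"

definition coplanar4 :: "pt4 \<Rightarrow> pt4 \<Rightarrow> pt4 \<Rightarrow> pt4 \<Rightarrow> bool" where
  "coplanar4 x1 x2 x3 x4 \<longleftrightarrow> (\<exists>a. (\<exists>j<4. a j \<noteq> 0) \<and>
      (\<forall>x\<in>{x1, x2, x3, x4}. (\<Sum>j<4. a j * x j) = 0))"

definition gam :: "complex \<Rightarrow> complex \<Rightarrow> complex \<Rightarrow> complex \<Rightarrow> bmap" where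
  "gam p q r s = (4, \<lambda>j. if j = 0 then [:-p, 0, 0, 0, 1:]
                         else if j = 1 then [:q, 0, 0, 1:]
                         else if j = 2 then [:-r, 0, 1:]
                         else [:s, 1:])"

end

theory Submission
  imports Defs "Jordan_Normal_Form.Determinant"
begin

lemma bform4: "bform 4 P u v = coeff P 0 * v^4 + coeff P 1 * u * v^3 + coeff P 2 * u^2 * v^2
   + coeff P 3 * u^3 * v + coeff P 4 * u^4"
  by (simp add: bform_def eval_nat_numeral atMost_Suc algebra_simps)

definition Gf :: "complex \<Rightarrow> complex \<Rightarrow> complex \<Rightarrow> complex \<Rightarrow> nat \<Rightarrow> complex \<Rightarrow> complex \<Rightarrow> complex" where
  "Gf p q r s j u v = (if j = 0 then u^4 - p * v^4 else if j = 1 then u^3 * v + q * v^4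
     else if j = 2 then u^2 * v^2 - r * v^4 else u * v^3 + s * v^4)"

lemma gam_eval: "evalm (gam p q r s) z j = Gf p q r s j (fst (lift1 z)) (snd (lift1 z))"
  apply (simp add: evalm_def gam_def bform4)
  apply (simp add: Gf_def eval_nat_numeral algebra_simps)
  done

lemma Gf_hom: "Gf p q r s j (k * u) (k * v) = k^4 * Gf p q r s j u v"
  by (simp add: Gf_def algebra_simps power_mult_distrib eval_nat_numeral)

definition phiM :: "complex \<Rightarrow> complex \<Rightarrow> complex \<Rightarrow> complex \<Rightarrow> complex \<Rightarrow> complex \<Rightarrow> complex \<Rightarrow> complex \<Rightarrow> bmap" where
  "phiM p q r s m11 m12 m21 m22 = (4, \<lambda>j. if j = 0 then [:(m12^4) - p * (m22^4), (4*m11*m12^3) - p * (4*m21*m22^3), (6*m11^2*m12^2) - p * (6*m21^2*m22^2), (4*m11^3*m12) - p * (4*m21^3*m22), (m11^4) - p * (m21^4):] else if j = 1 then [:(m12^3*m22) + q * (m22^4), (m12^3*m21 + 3*m11*m12^2*m22) + q * (4*m21*m22^3), (3*m11*m12^2*m21 + 3*m11^2*m12*m22) + q * (6*m21^2*m22^2), (3*m11^2*m12*m21 + m11^3*m22) + q * (4*m21^3*m22), (m11^3*m21) + q * (m21^4):] else if j = 2 then [:(m12^2*m22^2) - r * (m22^4), (2*m12^2*m21*m22 + 2*m11*m12*m22^2) - r * (4*m21*m22^3), (m12^2*m21^2 + 4*m11*m12*m21*m22 + m11^2*m22^2) - r * (6*m21^2*m22^2), (2*m11*m12*m21^2 + 2*m11^2*m21*m22)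 - r * (4*m21^3*m22), (m11^2*m21^2) - r * (m21^4):] else [:(m12*m22^3) + s * (m22^4), (3*m12*m21*m22^2 + m11*m22^3) + s * (4*m21*m22^3), (3*m12*m21^2*m22 + 3*m11*m21*m22^2) + s * (6*m21^2*m22^2), (m12*m21^3 + 3*m11*m21^2*m22) + s * (4*m21^3*m22), (m11*m21^3) + s * (m21^4):])"

lemma phi_eval: "evalm (phiM p q r s m11 m12 m21 m22) z j =
   Gf p q r s j (m11 * fst (lift1 z) + m12 * snd (lift1 z)) (m21 * fst (lift1 z) + m22 * snd (lift1 z))"
  apply (simp add: evalm_def phiM_def bform4)
  apply (simp add: Gf_def eval_nat_numeral)
  apply (simp add: algebra_simps)
  done

lemma peq_refl: "peq x x"
  unfolding peq_def by (rule exI[of _ 1]) simp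

lemma peq_sym: "peq x y \<Longrightarrow> peq y x"
proof -
  assume "peq x y"
  then obtain c where c: "c \<noteq> 0" "\<forall>j<4. x j = c * y j" unfolding peq_def by blast
  show "peq y x" unfolding peq_def
    by (rule exI[of _ "1/c"]) (use c in simp)
qed

lemma peq_trans: "peq x y \<Longrightarrow> peq y z \<Longrightarrow> peq x z"
proof -
  assume "peq x y" "peq y z"
  then obtain c d where c: "c \<noteq> 0" "\<forall>j<4. x j = c * y j" "d \<noteq> 0" "\<forall>j<4. y j = d * z j"
    unfolding peq_def by blast
  show "peq x z" unfolding peq_def
    by (rule exI[of _ "c*d"]) (use c in simp)
qed

lemma peq_scale: "k \<noteq> 0 \<Longrightarrow> (\<And>j. j < 4 \<Longrightarrow> x j = k * y j) \<Longrightarrow> peq x y"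
  unfolding peq_def by blast

lemma lift1_nz: "lift1 z \<noteq> (0, 0)"
  by (cases z) auto

lemma gam_nz:
  assumes "r \<noteq> s ^ 2 \<or> q \<noteq> s ^ 3 \<or> p \<noteq> s ^ 4"
  shows "\<exists>j<4. evalm (gam p q r s) z j \<noteq> 0"
proof (cases z)
  case None
  then show ?thesis by (intro exI[of _ 0]) (simp add: gam_eval Gf_def)
next
  case (Some t)
  show ?thesis
  proof (rule ccontr)
    assume "\<not> ?thesis"
    then have "\<forall>j<4. evalm (gam p q r s) z j = 0" by blast
    then have e: "t^4 - p = 0" "t^3 + q = 0" "t^2 - r = 0" "t + s = 0"
      using Some by (auto simp: gam_eval Gf_def dest: spec[of _ 0] spec[of _ 1] spec[of _ 2] spec[of _ 3])
    then have "t = -s" by (simp add: add_eq_0_iff)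
    with e assms show False by (auto simp: eval_nat_numeral)
  qed
qed

lemma phi_to_gam:
  assumes det: "m11 * m22 - m12 * m21 \<noteq> 0"
  shows "\<exists>w c. c \<noteq> 0 \<and> (\<forall>j. evalm (phiM p q r s m11 m12 m21 m22) z j = c * evalm (gam p q r s) w j)"
proof -
  obtain x y where xy: "lift1 z = (x, y)" by force
  define u where "u = m11 * x + m12 * y"
  define v where "v = m21 * x + m22 * y"
  have nz: "(x, y) \<noteq> (0, 0)" using lift1_nz xy by metis
  have uv: "u \<noteq> 0 \<or> v \<noteq> 0"
  proof (rule ccontr)
    assume "\<not> ?thesis"
    then have "u = 0" "v = 0" by auto
    have "(m11 * m22 - m12 * m21) * x = m22 * u - m12 * v" "(m11 * m22 - m12 * m21) * y = m11 * v - m21 * u"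
      unfolding u_def v_def by (simp_all add: algebra_simps)
    then have "(m11 * m22 - m12 * m21) * x = 0" "(m11 * m22 - m12 * m21) * y = 0"
      using \<open>u = 0\<close> \<open>v = 0\<close> by simp_all
    with det nz show False by simp
  qed
  have ev: "evalm (phiM p q r s m11 m12 m21 m22) z j = Gf p q r s j u v" for j
    by (simp add: phi_eval xy u_def v_def)
  show ?thesis
  proof (cases "v = 0")
    case True
    then have "u \<noteq> 0" using uv by simp
    have "Gf p q r s j u v = u^4 * evalm (gam p q r s) None j" for j
      using Gf_hom[of p q r s j u 1 0] True by (simp add: gam_eval)
    then show ?thesis using \<open>u \<noteq> 0\<close> ev by (intro exI[of _ None] exI[of _ "u^4"]) simp
  next
    case False
    have "Gf p q r s j u v = v^4 * evalm (gam p q r s) (Some (u / v)) j" for j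
      using Gf_hom[of p q r s j v "u/v" 1] False by (simp add: gam_eval)
    then show ?thesis using False ev by (intro exI[of _ "Some (u/v)"] exI[of _ "v^4"]) simp
  qed
qed

lemma gam_to_phi:
  assumes det: "m11 * m22 - m12 * m21 \<noteq> 0"
  shows "\<exists>z c. c \<noteq> 0 \<and> (\<forall>j. evalm (phiM p q r s m11 m12 m21 m22) z j = c * evalm (gam p q r s) w j)"
proof -
  obtain u v where uv: "lift1 w = (u, v)" by force
  define D where "D = m11 * m22 - m12 * m21"
  define x where "x = inverse D * (m22 * u - m12 * v)"
  define y where "y = inverse D * (m11 * v - m21 * u)"
  have nz: "(u, v) \<noteq> (0, 0)" using lift1_nz uv by metis
  have Mx: "m11 * x + m12 * y = u" "m21 * x + m22 * y = v"
  proof -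
    have "m11 * x + m12 * y = (inverse D * D) * u" "m21 * x + m22 * y = (inverse D * D) * v"
      unfolding x_def y_def D_def by (simp_all add: algebra_simps)
    then show "m11 * x + m12 * y = u" "m21 * x + m22 * y = v" using det D_def by simp_all
  qed
  have xy: "x \<noteq> 0 \<or> y \<noteq> 0" using Mx nz by auto
  have gw: "evalm (gam p q r s) w j = Gf p q r s j u v" for j by (simp add: gam_eval uv)
  show ?thesis
  proof (cases "y = 0")
    case True
    then have "x \<noteq> 0" using xy by simp
    have "evalm (phiM p q r s m11 m12 m21 m22) None j = (1/x)^4 * Gf p q r s j u v" for j
    proof -
      have "evalm (phiM p q r s m11 m12 m21 m22) None j = Gf p q r s j ((1/x) * u) ((1/x) * v)"
      proof -
        have "m11 = (1/x) * u" "m21 = (1/x) * v" using Mx True \<open>x \<noteq> 0\<close> by (simp_all add: field_simps)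
        then show ?thesis by (simp add: phi_eval)
      qed
      then show ?thesis using Gf_hom[of p q r s j "1/x" u v] by simp
    qed
    then show ?thesis using \<open>x \<noteq> 0\<close> gw by (intro exI[of _ None] exI[of _ "(1/x)^4"]) simp
  next
    case False
    have "evalm (phiM p q r s m11 m12 m21 m22) (Some (x/y)) j = (1/y)^4 * Gf p q r s j u v" for j
    proof -
      have "m11 * (x / y) + m12 = (1/y) * u" "m21 * (x / y) + m22 = (1/y) * v"
        using Mx False by (simp_all add: field_simps)
      then have "evalm (phiM p q r s m11 m12 m21 m22) (Some (x/y)) j = Gf p q r s j ((1/y) * u) ((1/y) * v)"
        by (simp add: phi_eval)
      then show ?thesis using Gf_hom[of p q r s j "1/y" u v] by simp
    qed
    then show ?thesis using False gw by (intro exI[of _ "Some (x/y)"] exI[of _ "(1/y)^4"]) simp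
  qed
qed

lemma deg5: "degree [:a, b, c, d, e:] \<le> 4"
  by (rule degree_le) (auto simp: coeff_pCons split: nat.split)

lemma peq_nz: "peq x y \<Longrightarrow> \<exists>j<4. y j \<noteq> 0 \<Longrightarrow> \<exists>j<4. x j \<noteq> 0"
  unfolding peq_def by auto

lemma phi_bmap:
  assumes A1: "r \<noteq> s ^ 2 \<or> q \<noteq> s ^ 3 \<or> p \<noteq> s ^ 4"
    and det: "m11 * m22 - m12 * m21 \<noteq> 0"
  shows "is_bmap (phiM p q r s m11 m12 m21 m22)"
    and "curve_img (phiM p q r s m11 m12 m21 m22) = curve_img (gam p q r s)"
proof -
  let ?f = "phiM p q r s m11 m12 m21 m22"
  let ?g = "gam p q r s"
  have pg: "\<exists>w. peq (evalm ?f z) (evalm ?g w)" for z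
    using phi_to_gam[OF det, of p q r s z] peq_scale by metis
  have gp: "\<exists>z. peq (evalm ?f z) (evalm ?g w)" for w
    using gam_to_phi[OF det, of p q r s w] peq_scale by metis
  show "is_bmap ?f"
    unfolding is_bmap_def
  proof (intro conjI allI impI)
    fix j :: nat assume "j < 4"
    show "degree (snd ?f j) \<le> fst ?f" by (simp add: phiM_def deg5)
  next
    fix z
    obtain w where "peq (evalm ?f z) (evalm ?g w)" using pg by blast
    then show "\<exists>j<4. evalm ?f z j \<noteq> 0" using peq_nz gam_nz[OF A1] by blast
  qed
  have "(\<exists>z. peq x (evalm ?f z)) \<longleftrightarrow> (\<exists>w. peq x (evalm ?g w))" for x
  proof
    assume "\<exists>z. peq x (evalm ?f z)"
    then obtain z where "peq x (evalm ?f z)" by blast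
    moreover obtain w where "peq (evalm ?f z) (evalm ?g w)" using pg by blast
    ultimately show "\<exists>w. peq x (evalm ?g w)" using peq_trans by blast
  next
    assume "\<exists>w. peq x (evalm ?g w)"
    then obtain w where "peq x (evalm ?g w)" by blast
    moreover obtain z where "peq (evalm ?f z) (evalm ?g w)" using gp by blast
    ultimately show "\<exists>z. peq x (evalm ?f z)" using peq_trans peq_sym by blast
  qed
  then show "curve_img ?f = curve_img ?g" unfolding curve_img_def by blast
qed

lemma lincomb:
  assumes "fst m = 4"
  shows "(\<Sum>j<4. a j * evalm m z j) =
    (\<Sum>j<4. a j * coeff (snd m j) 0) * snd (lift1 z)^4 + (\<Sum>j<4. a j * coeff (snd m j) 1) * fst (lift1 z) * snd (lift1 z)^3
    + (\<Sum>j<4. a j * coeff (snd m j) 2) * fst (lift1 z)^2 * snd (lift1 z)^2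
    + (\<Sum>j<4. a j * coeff (snd m j) 3) * fst (lift1 z)^3 * snd (lift1 z)
    + (\<Sum>j<4. a j * coeff (snd m j) 4) * fst (lift1 z)^4"
  using assms by (simp add: evalm_def bform4 sum.distrib sum_distrib_left sum_distrib_right algebra_simps)

lemma lincomb_Some:
  assumes "fst m = 4"
  shows "(\<Sum>j<4. a j * evalm m (Some t) j) =
    (\<Sum>j<4. a j * coeff (snd m j) 0) + (\<Sum>j<4. a j * coeff (snd m j) 1) * t
    + (\<Sum>j<4. a j * coeff (snd m j) 2) * t^2
    + (\<Sum>j<4. a j * coeff (snd m j) 3) * t^3
    + (\<Sum>j<4. a j * coeff (snd m j) 4) * t^4"
  using lincomb[OF assms, of a "Some t"] by simp

lemma eval_Some0: "fst m = 4 \<Longrightarrow> evalm m (Some 0) j = coeff (snd m j) 0"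
  by (simp add: evalm_def bform4)

lemma eval_None: "fst m = 4 \<Longrightarrow> evalm m None j = coeff (snd m j) 4"
  by (simp add: evalm_def bform4)

lemma sum4: "(\<Sum>j<(4::nat). f j) = f 0 + f 1 + f 2 + (f 3 :: complex)"
  by (simp add: eval_nat_numeral)

lemma phi_indep:
  assumes A1: "r \<noteq> s ^ 2 \<or> q \<noteq> s ^ 3 \<or> p \<noteq> s ^ 4"
    and det: "m11 * m22 - m12 * m21 \<noteq> 0"
  shows "\<forall>a. (\<forall>i\<le>4. (\<Sum>j<4. a j * coeff (snd (phiM p q r s m11 m12 m21 m22) j) i) = 0) \<longrightarrow> (\<forall>j<4. a j = 0)"
proof (rule allI, rule impI)
  fix a :: "nat \<Rightarrow> complex"
  let ?f = "phiM p q r s m11 m12 m21 m22"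
  assume H: "\<forall>i\<le>4. (\<Sum>j<4. a j * coeff (snd ?f j) i) = 0"
  have f0: "(\<Sum>j<4. a j * evalm ?f z j) = 0" for z
    using H by (subst lincomb) (auto simp: phiM_def)
  have g0: "a 0 * (u^4 - p) + a 1 * (u^3 + q) + a 2 * (u^2 - r) + a 3 * (u + s) = 0" for u
  proof -
    obtain z c where zc: "c \<noteq> 0" "\<forall>j. evalm ?f z j = c * evalm (gam p q r s) (Some u) j"
      using gam_to_phi[OF det] by blast
    have "c * (\<Sum>j<4. a j * evalm (gam p q r s) (Some u) j) = 0"
      using f0[of z] zc(2) by (simp add: sum_distrib_left algebra_simps)
    then have "(\<Sum>j<4. a j * evalm (gam p q r s) (Some u) j) = 0" using zc(1) by simp
    then show ?thesis by (simp add: sum4 gam_eval Gf_def)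
  qed
  define P where "P = [:- a 0 * p + a 1 * q - a 2 * r + a 3 * s, a 3, a 2, a 1, a 0:]"
  have "poly P u = 0" for u using g0[of u] by (simp add: P_def algebra_simps eval_nat_numeral)
  then have "P = 0" using poly_all_0_iff_0 by blast
  then have "a 0 = 0" "a 1 = 0" "a 2 = 0" "a 3 = 0" by (simp_all add: P_def)
  then show "\<forall>j<4. a j = 0" by (auto simp: less_Suc_eq numeral_eq_Suc)
qed

lemma cubic_zero:
  fixes c0 c1 c2 c3 :: complex
  assumes "distinct [x1, x2, x3, x4]"
    and "\<forall>x\<in>{x1, x2, x3, x4}. c0 + c1 * x + c2 * x^2 + c3 * x^3 = 0"
  shows "c0 = 0 \<and> c1 = 0 \<and> c2 = 0 \<and> c3 = 0"
proof -
  define P where "P = [:c0, c1, c2, c3:]"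
  have pv: "poly P x = c0 + c1 * x + c2 * x^2 + c3 * x^3" for x
    by (simp add: P_def algebra_simps eval_nat_numeral)
  have "P = 0"
  proof (rule ccontr)
    assume "P \<noteq> 0"
    then have "card {x. poly P x = 0} \<le> degree P" by (rule card_poly_roots_bound)
    also have "degree P \<le> 3" unfolding P_def by (rule degree_le) (auto simp: coeff_pCons split: nat.split)
    finally have c3: "card {x. poly P x = 0} \<le> 3" .
    have "{x1, x2, x3, x4} \<subseteq> {x. poly P x = 0}" using assms(2) pv by auto
    then have "card {x1, x2, x3, x4} \<le> card {x. poly P x = 0}"
      using poly_roots_finite[OF \<open>P \<noteq> 0\<close>] by (intro card_mono) auto
    moreover have "card {x1, x2, x3, x4} = 4" using assms(1) by auto
    ultimately show False using c3 by simp
  qed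
  then show ?thesis by (simp add: P_def)
qed

lemma quad_zero:
  fixes c0 c1 c2 :: complex
  assumes "distinct [x1, x2, x3]"
    and "\<forall>x\<in>{x1, x2, x3}. c0 + c1 * x + c2 * x^2 = 0"
  shows "c0 = 0 \<and> c1 = 0 \<and> c2 = 0"
proof -
  define P where "P = [:c0, c1, c2:]"
  have pv: "poly P x = c0 + c1 * x + c2 * x^2" for x
    by (simp add: P_def algebra_simps eval_nat_numeral)
  have "P = 0"
  proof (rule ccontr)
    assume "P \<noteq> 0"
    then have "card {x. poly P x = 0} \<le> degree P" by (rule card_poly_roots_bound)
    also have "degree P \<le> 2" unfolding P_def by (rule degree_le) (auto simp: coeff_pCons split: nat.split)
    finally have c3: "card {x. poly P x = 0} \<le> 2" .
    have "{x1, x2, x3} \<subseteq> {x. poly P x = 0}" using assms(2) pv by auto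
    then have "card {x1, x2, x3} \<le> card {x. poly P x = 0}"
      using poly_roots_finite[OF \<open>P \<noteq> 0\<close>] by (intro card_mono) auto
    moreover have "card {x1, x2, x3} = 3" using assms(1) by auto
    ultimately show False using c3 by simp
  qed
  then show ?thesis by (simp add: P_def)
qed

lemma plane3:
  fixes x1 x2 x3 :: pt4
  shows "\<exists>a. (\<exists>j<4. a j \<noteq> 0) \<and> (\<Sum>j<4. a j * x1 j) = 0 \<and> (\<Sum>j<4. a j * x2 j) = 0
     \<and> (\<Sum>j<4. a j * x3 j) = 0"
proof -
  define c where "c = (\<lambda>i::nat. vec 4 (\<lambda>j. if i = 0 then x1 j else if i = 1 then x2 j else x3 j))"
  define A where "A = mat\<^sub>r 4 4 (\<lambda>i. if i = 3 then 0\<^sub>v 4 else c i)"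
  have "det A = 0" unfolding A_def by (rule det_row_0) (auto simp: c_def)
  moreover have "A \<in> carrier_mat 4 4" by (simp add: A_def)
  ultimately obtain v where v: "v \<in> carrier_vec 4" "v \<noteq> 0\<^sub>v 4" "A *\<^sub>v v = 0\<^sub>v 4"
    using det_0_iff_vec_prod_zero_field by blast
  define a where "a = (\<lambda>j. v $ j)"
  have "\<exists>j<4. a j \<noteq> 0"
  proof (rule ccontr)
    assume "\<not> ?thesis"
    then have "v = 0\<^sub>v 4" using v(1) by (auto simp: a_def vec_eq_iff)
    with v(2) show False by simp
  qed
  moreover have X: "(\<Sum>j<4. a j * x j) = 0" if "i < 3" and x: "x = (if i = 0 then x1 else if i = 1 then x2 else x3)" for i :: nat and x
  proof -
    have "(A *\<^sub>v v) $ i = 0" using v(3) that by simp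
    then show ?thesis using that v(1)
      by (auto simp: A_def c_def a_def scalar_prod_def atLeast0LessThan mult.commute)
  qed
  ultimately show ?thesis
    using X[of 0 x1] X[of 1 x2] X[of 2 x3] by auto
qed

definition "es1 y1 y2 y3 y4 = y1 + y2 + y3 + (y4::complex)"
definition "es2 y1 y2 y3 y4 = y1*y2 + y1*y3 + y1*y4 + y2*y3 + y2*y4 + y3*(y4::complex)"
definition "es3 y1 y2 y3 y4 = y1*y2*y3 + y1*y2*y4 + y1*y3*y4 + y2*y3*(y4::complex)"
definition "es4 y1 y2 y3 y4 = y1*y2*y3*(y4::complex)"

lemma ident:
  fixes H0 H1 H2 H3 H4 y y1 y2 y3 y4 :: complex
  shows "H0 + H1 * y + H2 * y^2 + H3 * y^3 + H4 * y^4 - H4 * ((y-y1)*(y-y2)*(y-y3)*(y-y4)) =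
    (H0 - H4 * es4 y1 y2 y3 y4) + (H1 + H4 * es3 y1 y2 y3 y4) * y + (H2 - H4 * es2 y1 y2 y3 y4) * y^2
    + (H3 + H4 * es1 y1 y2 y3 y4) * y^3"
  unfolding es1_def es2_def es3_def es4_def by (simp add: eval_nat_numeral algebra_simps)

lemma roots4:
  fixes H0 H1 H2 H3 H4 :: complex
  assumes "distinct [y1, y2, y3, y4]"
    and "\<forall>y\<in>{y1, y2, y3, y4}. H0 + H1 * y + H2 * y^2 + H3 * y^3 + H4 * y^4 = 0"
  shows "H0 = H4 * es4 y1 y2 y3 y4 \<and> H1 = - H4 * es3 y1 y2 y3 y4 \<and> H2 = H4 * es2 y1 y2 y3 y4
     \<and> H3 = - H4 * es1 y1 y2 y3 y4"
proof -
  have "\<forall>y\<in>{y1, y2, y3, y4}. (H0 - H4 * es4 y1 y2 y3 y4) + (H1 + H4 * es3 y1 y2 y3 y4) * y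
     + (H2 - H4 * es2 y1 y2 y3 y4) * y^2 + (H3 + H4 * es1 y1 y2 y3 y4) * y^3 = 0"
    using assms(2) ident[of H0 H1 _ H2 H3 H4] by (metis (no_types, lifting) diff_zero empty_iff insert_iff mult_zero_left mult_zero_right right_minus_eq)
  from cubic_zero[OF assms(1) this] show ?thesis by (simp add: eq_neg_iff_add_eq_0 add.commute)
qed

lemma H_all_zero:
  assumes "H 0 = (0::complex)" "H 1 = 0" "H 2 = 0" "H 3 = 0" "H 4 = 0"
  shows "\<forall>i\<le>(4::nat). H i = 0"
proof (intro allI impI)
  fix i :: nat assume "i \<le> 4"
  then have "i = 0 \<or> i = 1 \<or> i = 2 \<or> i = 3 \<or> i = 4" by auto
  then show "H i = 0" using assms by auto
qed

lemma node_plane: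
  assumes m4: "fst m = 4"
    and nrm: "\<forall>j<4. coeff (snd m j) 0 = coeff (snd m j) 4"
    and ind: "\<forall>a. (\<forall>i\<le>4. (\<Sum>j<4. a j * coeff (snd m j) i) = 0) \<longrightarrow> (\<forall>j<4. a j = 0)"
    and dx: "distinct [x1, x2, x3]" and nz: "x1 \<noteq> 0" "x2 \<noteq> 0" "x3 \<noteq> 0"
  shows "\<exists>a K. K \<noteq> 0 \<and> (\<exists>j<4. a j \<noteq> 0) \<and> (\<forall>t. (\<Sum>j<4. a j * evalm m (Some t) j) =
            K * ((t - x1) * (t - x2) * (t - x3) * (t - 1 / (x1 * x2 * x3))))"
proof -
  obtain a where a: "\<exists>j<4. a j \<noteq> 0" "(\<Sum>j<4. a j * evalm m (Some x1) j) = 0"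
    "(\<Sum>j<4. a j * evalm m (Some x2) j) = 0" "(\<Sum>j<4. a j * evalm m (Some x3) j) = 0"
    using plane3 by blast
  define H where "H i = (\<Sum>j<4. a j * coeff (snd m j) i)" for i
  have f: "(\<Sum>j<4. a j * evalm m (Some t) j) = H 0 + H 1 * t + H 2 * t^2 + H 3 * t^3 + H 4 * t^4" for t
    unfolding H_def by (rule lincomb_Some[OF m4])
  have H04: "H 0 = H 4" unfolding H_def using nrm by (intro sum.cong) auto
  define \<rho> where "\<rho> = 1 / (x1 * x2 * x3)"
  have e4: "es4 x1 x2 x3 \<rho> = 1" using nz by (simp add: es4_def \<rho>_def)
  define g where "g y = (H 0 - H 4 * es4 x1 x2 x3 \<rho>) + (H 1 + H 4 * es3 x1 x2 x3 \<rho>) * y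
    + (H 2 - H 4 * es2 x1 x2 x3 \<rho>) * y^2 + (H 3 + H 4 * es1 x1 x2 x3 \<rho>) * y^3" for y
  have gi: "g y = H 0 + H 1 * y + H 2 * y^2 + H 3 * y^3 + H 4 * y^4 - H 4 * ((y-x1)*(y-x2)*(y-x3)*(y-\<rho>))" for y
    unfolding g_def by (rule ident[symmetric])
  have "g 0 = 0" using H04 e4 by (simp add: g_def)
  moreover have "g x1 = 0" using gi[of x1] f[of x1] a(2) by simp
  moreover have "g x2 = 0" using gi[of x2] f[of x2] a(3) by simp
  moreover have "g x3 = 0" using gi[of x3] f[of x3] a(4) by simp
  ultimately have "\<forall>y\<in>{0, x1, x2, x3}. g y = 0" by auto
  moreover have "distinct [0, x1, x2, x3]" using dx nz by auto
  ultimately have c: "H 0 - H 4 * es4 x1 x2 x3 \<rho> = 0 \<and> H 1 + H 4 * es3 x1 x2 x3 \<rho> = 0 \<and>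
     H 2 - H 4 * es2 x1 x2 x3 \<rho> = 0 \<and> H 3 + H 4 * es1 x1 x2 x3 \<rho> = 0"
    using cubic_zero[of 0 x1 x2 x3] unfolding g_def by blast
  have "H 4 \<noteq> 0"
  proof
    assume "H 4 = 0"
    then have "\<forall>i\<le>4. H i = 0" using c by (intro H_all_zero) auto
    then show False using ind a(1) unfolding H_def by blast
  qed
  moreover have "\<forall>t. (\<Sum>j<4. a j * evalm m (Some t) j) = H 4 * ((t - x1) * (t - x2) * (t - x3) * (t - \<rho>))"
  proof
    fix t
    have "g t = 0" using c by (simp add: g_def)
    then show "(\<Sum>j<4. a j * evalm m (Some t) j) = H 4 * ((t - x1) * (t - x2) * (t - x3) * (t - \<rho>))"
      using gi[of t] f[of t] by simp
  qed
  ultimately show ?thesis using a(1) unfolding \<rho>_def by blast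
qed

lemma cusp_plane:
  assumes m4: "fst m = 4"
    and nrm: "\<forall>j<4. coeff (snd m j) 3 = 0"
    and ind: "\<forall>a. (\<forall>i\<le>4. (\<Sum>j<4. a j * coeff (snd m j) i) = 0) \<longrightarrow> (\<forall>j<4. a j = 0)"
    and dx: "distinct [x1, x2, x3]"
  shows "\<exists>a K. K \<noteq> 0 \<and> (\<exists>j<4. a j \<noteq> 0) \<and> (\<forall>t. (\<Sum>j<4. a j * evalm m (Some t) j) =
            K * ((t - x1) * (t - x2) * (t - x3) * (t + (x1 + x2 + x3))))"
proof -
  obtain a where a: "\<exists>j<4. a j \<noteq> 0" "(\<Sum>j<4. a j * evalm m (Some x1) j) = 0"
    "(\<Sum>j<4. a j * evalm m (Some x2) j) = 0" "(\<Sum>j<4. a j * evalm m (Some x3) j) = 0"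
    using plane3 by blast
  define H where "H i = (\<Sum>j<4. a j * coeff (snd m j) i)" for i
  have f: "(\<Sum>j<4. a j * evalm m (Some t) j) = H 0 + H 1 * t + H 2 * t^2 + H 3 * t^3 + H 4 * t^4" for t
    unfolding H_def by (rule lincomb_Some[OF m4])
  have H3: "H 3 = 0" unfolding H_def using nrm by simp
  define \<rho> where "\<rho> = - (x1 + x2 + x3)"
  have e1: "es1 x1 x2 x3 \<rho> = 0" by (simp add: es1_def \<rho>_def)
  define g where "g y = (H 0 - H 4 * es4 x1 x2 x3 \<rho>) + (H 1 + H 4 * es3 x1 x2 x3 \<rho>) * y
    + (H 2 - H 4 * es2 x1 x2 x3 \<rho>) * y^2 + (H 3 + H 4 * es1 x1 x2 x3 \<rho>) * y^3" for y
  have gi: "g y = H 0 + H 1 * y + H 2 * y^2 + H 3 * y^3 + H 4 * y^4 - H 4 * ((y-x1)*(y-x2)*(y-x3)*(y-\<rho>))" for y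
    unfolding g_def by (rule ident[symmetric])
  have "\<forall>y\<in>{x1, x2, x3}. (H 0 - H 4 * es4 x1 x2 x3 \<rho>) + (H 1 + H 4 * es3 x1 x2 x3 \<rho>) * y
    + (H 2 - H 4 * es2 x1 x2 x3 \<rho>) * y^2 = 0"
  proof
    fix y assume "y \<in> {x1, x2, x3}"
    then have "g y = 0" using a(2-4) f gi by auto
    then show "(H 0 - H 4 * es4 x1 x2 x3 \<rho>) + (H 1 + H 4 * es3 x1 x2 x3 \<rho>) * y
      + (H 2 - H 4 * es2 x1 x2 x3 \<rho>) * y^2 = 0" using H3 e1 by (simp add: g_def)
  qed
  then have c: "H 0 - H 4 * es4 x1 x2 x3 \<rho> = 0 \<and> H 1 + H 4 * es3 x1 x2 x3 \<rho> = 0 \<and>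
     H 2 - H 4 * es2 x1 x2 x3 \<rho> = 0"
    using quad_zero[OF dx] by blast
  have "H 4 \<noteq> 0"
  proof
    assume "H 4 = 0"
    then have "\<forall>i\<le>4. H i = 0" using c H3 by (intro H_all_zero) auto
    then show False using ind a(1) unfolding H_def by blast
  qed
  moreover have "\<forall>t. (\<Sum>j<4. a j * evalm m (Some t) j) = H 4 * ((t - x1) * (t - x2) * (t - x3) * (t + (x1 + x2 + x3)))"
  proof
    fix t
    have "g t = 0" using c H3 e1 by (simp add: g_def)
    moreover have "t - \<rho> = t + (x1 + x2 + x3)" by (simp add: \<rho>_def)
    ultimately show "(\<Sum>j<4. a j * evalm m (Some t) j) = H 4 * ((t - x1) * (t - x2) * (t - x3) * (t + (x1 + x2 + x3)))"
      using gi[of t] f[of t] by simp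
  qed
  ultimately show ?thesis using a(1) by blast
qed

lemma fresh: "finite (A :: complex set) \<Longrightarrow> \<exists>x. x \<notin> A"
  using ex_new_if_finite[OF infinite_UNIV_char_0] by blast

lemma peq_lincomb:
  assumes "peq x y" "(\<Sum>j<4. a j * y j) = 0"
  shows "(\<Sum>j<4. a j * x j) = 0"
proof -
  obtain c where c: "\<forall>j<4. x j = c * y j" using assms(1) unfolding peq_def by blast
  have "(\<Sum>j<4. a j * x j) = (\<Sum>j<4. c * (a j * y j))" using c by (intro sum.cong) auto
  also have "\<dots> = c * (\<Sum>j<4. a j * y j)" by (simp add: sum_distrib_left)
  finally show ?thesis using assms(2) by simp
qed

lemma quartic_of:
  assumes m4: "fst m = 4" and a: "\<forall>x\<in>{x1, x2, x3, x4}. (\<Sum>j<4. a j * x j) = 0"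
    and xs: "x1 = evalm m (Some t1)" "x2 = evalm m (Some t2)" "x3 = evalm m (Some t3)" "x4 = evalm m (Some t4)"
  shows "\<forall>y\<in>{t1, t2, t3, t4}. (\<Sum>j<4. a j * coeff (snd m j) 0) + (\<Sum>j<4. a j * coeff (snd m j) 1) * y
    + (\<Sum>j<4. a j * coeff (snd m j) 2) * y^2 + (\<Sum>j<4. a j * coeff (snd m j) 3) * y^3
    + (\<Sum>j<4. a j * coeff (snd m j) 4) * y^4 = 0"
  using a xs lincomb_Some[OF m4, of a] by auto

lemma node_cop:
  assumes m4: "fst m = 4"
    and nrm: "\<forall>j<4. coeff (snd m j) 0 = coeff (snd m j) 4"
    and ind: "\<forall>a. (\<forall>i\<le>4. (\<Sum>j<4. a j * coeff (snd m j) i) = 0) \<longrightarrow> (\<forall>j<4. a j = 0)"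
    and dt: "distinct [t1, t2, t3, t4]" and nz: "t1 \<noteq> 0" "t2 \<noteq> 0" "t3 \<noteq> 0" "t4 \<noteq> 0"
  shows "coplanar4 (evalm m (Some t1)) (evalm m (Some t2)) (evalm m (Some t3)) (evalm m (Some t4))
     \<longleftrightarrow> t1 * t2 * t3 * t4 = 1"
proof
  assume "coplanar4 (evalm m (Some t1)) (evalm m (Some t2)) (evalm m (Some t3)) (evalm m (Some t4))"
  then obtain a where a: "\<exists>j<4. a j \<noteq> 0"
    "\<forall>x\<in>{evalm m (Some t1), evalm m (Some t2), evalm m (Some t3), evalm m (Some t4)}. (\<Sum>j<4. a j * x j) = 0"
    unfolding coplanar4_def by blast
  define H where "H i = (\<Sum>j<4. a j * coeff (snd m j) i)" for i
  have "\<forall>y\<in>{t1, t2, t3, t4}. H 0 + H 1 * y + H 2 * y^2 + H 3 * y^3 + H 4 * y^4 = 0"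
    using quartic_of[OF m4 a(2) refl refl refl refl] unfolding H_def .
  from roots4[OF dt this] have r: "H 0 = H 4 * es4 t1 t2 t3 t4" "H 1 = - H 4 * es3 t1 t2 t3 t4"
    "H 2 = H 4 * es2 t1 t2 t3 t4" "H 3 = - H 4 * es1 t1 t2 t3 t4" by auto
  have H04: "H 0 = H 4" unfolding H_def using nrm by (intro sum.cong) auto
  have "H 4 \<noteq> 0"
  proof
    assume "H 4 = 0"
    then have "\<forall>i\<le>4. H i = 0" using r by (intro H_all_zero) auto
    then show False using ind a(1) unfolding H_def by blast
  qed
  then show "t1 * t2 * t3 * t4 = 1" using r(1) H04 by (simp add: es4_def)
next
  assume p: "t1 * t2 * t3 * t4 = 1"
  have "distinct [t1, t2, t3]" using dt by auto
  from node_plane[OF m4 nrm ind this nz(1-3)] obtain a K where aK: "\<exists>j<4. a j \<noteq> 0"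
    "\<forall>t. (\<Sum>j<4. a j * evalm m (Some t) j) = K * ((t - t1) * (t - t2) * (t - t3) * (t - 1 / (t1 * t2 * t3)))"
    by blast
  have "1 / (t1 * t2 * t3) = t4" using p nz by (simp add: field_simps)
  then show "coplanar4 (evalm m (Some t1)) (evalm m (Some t2)) (evalm m (Some t3)) (evalm m (Some t4))"
    unfolding coplanar4_def using aK by (intro exI[of _ a]) auto
qed

lemma node_inj:
  assumes m4: "fst m = 4"
    and nrm: "\<forall>j<4. coeff (snd m j) 0 = coeff (snd m j) 4"
    and ind: "\<forall>a. (\<forall>i\<le>4. (\<Sum>j<4. a j * coeff (snd m j) i) = 0) \<longrightarrow> (\<forall>j<4. a j = 0)"
    and nz: "t \<noteq> 0" "t' \<noteq> 0" and pq: "peq (evalm m (Some t)) (evalm m (Some t'))"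
  shows "t = t'"
proof (rule ccontr)
  assume ne: "t \<noteq> t'"
  obtain u where u: "u \<notin> {0, t, t'}" using fresh[of "{0, t, t'}"] by blast
  obtain v where v: "v \<notin> {0, t, t', u, 1 / (t * t' * u)}" using fresh[of "{0, t, t', u, 1 / (t * t' * u)}"] by blast
  have "distinct [t', u, v]" using u v by auto
  from node_plane[OF m4 nrm ind this nz(2)] u v obtain a K where aK: "K \<noteq> 0"
    "\<forall>s. (\<Sum>j<4. a j * evalm m (Some s) j) = K * ((s - t') * (s - u) * (s - v) * (s - 1 / (t' * u * v)))"
    by auto
  have "(\<Sum>j<4. a j * evalm m (Some t') j) = 0" using aK(2) by simp
  then have "(\<Sum>j<4. a j * evalm m (Some t) j) = 0" using peq_lincomb[OF pq] by blast
  then have "t = 1 / (t' * u * v)" using aK ne u v by auto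
  moreover have "v \<noteq> 0" using v by auto
  ultimately have e: "(t * t' * u) * v = 1" using nz u by (simp add: field_simps)
  have nzs: "t * t' * u \<noteq> 0" using nz u by simp
  from e have "v = 1 / (t * t' * u)" using nzs by (simp add: eq_divide_eq mult.commute)
  then show False using v by simp
qed

lemma cusp_cop:
  assumes m4: "fst m = 4"
    and nrm: "\<forall>j<4. coeff (snd m j) 3 = 0"
    and ind: "\<forall>a. (\<forall>i\<le>4. (\<Sum>j<4. a j * coeff (snd m j) i) = 0) \<longrightarrow> (\<forall>j<4. a j = 0)"
    and dt: "distinct [t1, t2, t3, t4]"
  shows "coplanar4 (evalm m (Some t1)) (evalm m (Some t2)) (evalm m (Some t3)) (evalm m (Some t4))
     \<longleftrightarrow> t1 + t2 + t3 + t4 = 0"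
proof
  assume "coplanar4 (evalm m (Some t1)) (evalm m (Some t2)) (evalm m (Some t3)) (evalm m (Some t4))"
  then obtain a where a: "\<exists>j<4. a j \<noteq> 0"
    "\<forall>x\<in>{evalm m (Some t1), evalm m (Some t2), evalm m (Some t3), evalm m (Some t4)}. (\<Sum>j<4. a j * x j) = 0"
    unfolding coplanar4_def by blast
  define H where "H i = (\<Sum>j<4. a j * coeff (snd m j) i)" for i
  have "\<forall>y\<in>{t1, t2, t3, t4}. H 0 + H 1 * y + H 2 * y^2 + H 3 * y^3 + H 4 * y^4 = 0"
    using quartic_of[OF m4 a(2) refl refl refl refl] unfolding H_def .
  from roots4[OF dt this] have r: "H 0 = H 4 * es4 t1 t2 t3 t4" "H 1 = - H 4 * es3 t1 t2 t3 t4"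
    "H 2 = H 4 * es2 t1 t2 t3 t4" "H 3 = - H 4 * es1 t1 t2 t3 t4" by auto
  have H3: "H 3 = 0" unfolding H_def using nrm by simp
  have "H 4 \<noteq> 0"
  proof
    assume "H 4 = 0"
    then have "\<forall>i\<le>4. H i = 0" using r by (intro H_all_zero) auto
    then show False using ind a(1) unfolding H_def by blast
  qed
  then show "t1 + t2 + t3 + t4 = 0" using r(4) H3 by (simp add: es1_def)
next
  assume p: "t1 + t2 + t3 + t4 = 0"
  have "distinct [t1, t2, t3]" using dt by auto
  from cusp_plane[OF m4 nrm ind this] obtain a K where aK: "\<exists>j<4. a j \<noteq> 0"
    "\<forall>t. (\<Sum>j<4. a j * evalm m (Some t) j) = K * ((t - t1) * (t - t2) * (t - t3) * (t + (t1 + t2 + t3)))"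
    by blast
  have "t4 + (t1 + t2 + t3) = 0" using p by (simp add: algebra_simps)
  then show "coplanar4 (evalm m (Some t1)) (evalm m (Some t2)) (evalm m (Some t3)) (evalm m (Some t4))"
    unfolding coplanar4_def using aK by (intro exI[of _ a]) auto
qed

lemma cusp_inj:
  assumes m4: "fst m = 4"
    and nrm: "\<forall>j<4. coeff (snd m j) 3 = 0"
    and ind: "\<forall>a. (\<forall>i\<le>4. (\<Sum>j<4. a j * coeff (snd m j) i) = 0) \<longrightarrow> (\<forall>j<4. a j = 0)"
    and pq: "peq (evalm m (Some t)) (evalm m (Some t'))"
  shows "t = t'"
proof (rule ccontr)
  assume ne: "t \<noteq> t'"
  obtain u where u: "u \<notin> {t, t'}" using fresh[of "{t, t'}"] by blast
  obtain v where v: "v \<notin> {t, t', u, - (t + t' + u)}" using fresh[of "{t, t', u, - (t + t' + u)}"] by blast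
  have "distinct [t', u, v]" using u v by auto
  from cusp_plane[OF m4 nrm ind this] obtain a K where aK: "K \<noteq> 0"
    "\<forall>s. (\<Sum>j<4. a j * evalm m (Some s) j) = K * ((s - t') * (s - u) * (s - v) * (s + (t' + u + v)))"
    by auto
  have "(\<Sum>j<4. a j * evalm m (Some t') j) = 0" using aK(2) by simp
  then have "(\<Sum>j<4. a j * evalm m (Some t) j) = 0" using peq_lincomb[OF pq] by blast
  then have "t + (t' + u + v) = 0" using aK ne u v by auto
  then have "v = - (t + t' + u)" by (simp add: algebra_simps eq_neg_iff_add_eq_0)
  then show False using v by simp
qed

lemma bform_du4: "bform_du 4 P u v = coeff P 1 * v^3 + 2 * coeff P 2 * u * v^2 + 3 * coeff P 3 * u^2 * v
   + 4 * coeff P 4 * u^3"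
  by (simp add: bform_du_def eval_nat_numeral atMost_Suc algebra_simps)

lemma bform_dv4: "bform_dv 4 P u v = 4 * coeff P 0 * v^3 + 3 * coeff P 1 * u * v^2 + 2 * coeff P 2 * u^2 * v
   + coeff P 3 * u^3"
  by (simp add: bform_dv_def eval_nat_numeral atMost_Suc algebra_simps)

lemma gam_du: "evalm_du (gam p q r s) (Some t) j =
   (if j = 0 then 4 * t^3 else if j = 1 then 3 * t^2 else if j = 2 then 2 * t else 1)"
  apply (simp add: evalm_du_def gam_def bform_du4)
  apply (simp add: eval_nat_numeral)
  done

lemma gam_dv: "evalm_dv (gam p q r s) (Some t) j =
   (if j = 0 then - 4 * p else if j = 1 then 4 * q + t^3 else if j = 2 then 2 * t^2 - 4 * r else 4 * s + 3 * t)"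
  apply (simp add: evalm_dv_def gam_def bform_dv4)
  apply (simp add: eval_nat_numeral algebra_simps)
  done

lemma gam_du_None: "evalm_du (gam p q r s) None j = (if j = 0 then 4 else 0)"
  apply (simp add: evalm_du_def gam_def bform_du4)
  apply (simp add: eval_nat_numeral)
  done

lemma gam_dv_None: "evalm_dv (gam p q r s) None j = (if j = 1 then 1 else 0)"
  apply (simp add: evalm_dv_def gam_def bform_dv4)
  apply (simp add: eval_nat_numeral)
  done

lemma unram_None: "unram (gam p q r s) None"
  unfolding unram_def lin_indep2_def
proof
  assume "\<exists>a b. (a, b) \<noteq> (0, 0) \<and> (\<forall>j<4. a * evalm_du (gam p q r s) None j + b * evalm_dv (gam p q r s) None j = 0)"
  then obtain a b where ab: "(a, b) \<noteq> (0, 0)" "\<forall>j<4. a * evalm_du (gam p q r s) None j + b * evalm_dv (gam p q r s) None j = 0"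
    by blast
  have "a = 0" using ab(2)[rule_format, of 0] by (simp add: gam_du_None gam_dv_None)
  moreover have "b = 0" using ab(2)[rule_format, of 1] by (simp add: gam_du_None gam_dv_None)
  ultimately show False using ab(1) by simp
qed

lemma cusp_rel:
  assumes "\<not> unram (gam p q r s) (Some t)"
  shows "p = - ((4 * s + 3 * t) * t^3) \<and> q = 3 * s * t^2 + 2 * t^3 \<and> r = - 2 * s * t - t^2"
proof -
  obtain a b where ab: "(a, b) \<noteq> (0, 0)" "\<forall>j<4. a * evalm_du (gam p q r s) (Some t) j + b * evalm_dv (gam p q r s) (Some t) j = 0"
    using assms unfolding unram_def lin_indep2_def by blast
  have e0: "a * (4 * t^3) + b * (- 4 * p) = 0" using ab(2)[rule_format, of 0] by (simp add: gam_du gam_dv)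
  have e1: "a * (3 * t^2) + b * (4 * q + t^3) = 0" using ab(2)[rule_format, of 1] by (simp add: gam_du gam_dv)
  have e2: "a * (2 * t) + b * (2 * t^2 - 4 * r) = 0" using ab(2)[rule_format, of 2] by (simp add: gam_du gam_dv)
  have e3: "a + b * (4 * s + 3 * t) = 0" using ab(2)[rule_format, of 3] by (simp add: gam_du gam_dv)
  have bnz: "b \<noteq> 0" using e3 ab(1) by auto
  have a: "a = - b * (4 * s + 3 * t)" using e3 by (simp add: algebra_simps eq_neg_iff_add_eq_0)
  have "(-4) * (b * (p + (4 * s + 3 * t) * t^3)) = a * (4 * t^3) + b * (- 4 * p)"
    unfolding a by (simp add: algebra_simps)
  then have "(-4) * (b * (p + (4 * s + 3 * t) * t^3)) = 0" using e0 by metis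
  then have "b * (p + (4 * s + 3 * t) * t^3) = 0" by simp
  then have "p + (4 * s + 3 * t) * t^3 = 0" using bnz by simp
  then have "p = - ((4 * s + 3 * t) * t^3)" by (simp add: add_eq_0_iff2)
  note P = this
  have "4 * (b * (q - (3 * s * t^2 + 2 * t^3))) = a * (3 * t^2) + b * (4 * q + t^3)"
    unfolding a by (simp add: algebra_simps eval_nat_numeral)
  then have "4 * (b * (q - (3 * s * t^2 + 2 * t^3))) = 0" using e1 by metis
  then have "q - (3 * s * t^2 + 2 * t^3) = 0" using bnz by simp
  then have Q: "q = 3 * s * t^2 + 2 * t^3" by simp
  have "(-4) * (b * (r - (- 2 * s * t - t^2))) = a * (2 * t) + b * (2 * t^2 - 4 * r)"
    unfolding a by (simp add: algebra_simps eval_nat_numeral)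
  then have "(-4) * (b * (r - (- 2 * s * t - t^2))) = 0" using e2 by metis
  then have "r - (- 2 * s * t - t^2) = 0" using bnz by simp
  then have R: "r = - 2 * s * t - t^2" by (simp only: right_minus_eq)
  show ?thesis using P Q R by blast
qed

lemma csqrt4: "(csqrt (csqrt c))^4 = c"
proof -
  have "(csqrt (csqrt c))^4 = ((csqrt (csqrt c))^2)^2" by (simp add: power4_eq_xxxx power2_eq_square)
  also have "\<dots> = (csqrt c)^2" by (simp only: power2_csqrt)
  also have "\<dots> = c" by (simp only: power2_csqrt)
  finally show ?thesis .
qed

lemma node_part:
  fixes p q r s :: complex
  assumes A1: "r \<noteq> s ^ 2 \<or> q \<noteq> s ^ 3 \<or> p \<noteq> s ^ 4"
    and ex: "\<exists>x. is_node (gam p q r s) x"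
  shows "\<exists>\<phi>. is_param (curve_img (gam p q r s)) \<phi> \<and>
               peq (evalm \<phi> (Some 0)) (evalm \<phi> None) \<and>
               is_node (gam p q r s) (evalm \<phi> (Some 0)) \<and>
               (\<forall>t1 t2 t3 t4. distinct [t1, t2, t3, t4] \<and>
                  (\<forall>t\<in>{t1, t2, t3, t4}. \<not> peq (evalm \<phi> (Some t)) (evalm \<phi> (Some 0))) \<longrightarrow>
                  (coplanar4 (evalm \<phi> (Some t1)) (evalm \<phi> (Some t2))
                             (evalm \<phi> (Some t3)) (evalm \<phi> (Some t4))
                   \<longleftrightarrow> t1 * t2 * t3 * t4 = 1))"
proof -
  let ?g = "gam p q r s"
  obtain x a b where nd: "a \<noteq> b" "{z. peq (evalm ?g z) x} = {a, b}" "unram ?g a" "unram ?g b"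
    "\<not> (in_span2 (evalm_du ?g b) (evalm_du ?g a) (evalm_dv ?g a) \<and>
         in_span2 (evalm_dv ?g b) (evalm_du ?g a) (evalm_dv ?g a))"
    using ex unfolding is_node_def by blast
  have "a \<in> {z. peq (evalm ?g z) x}" "b \<in> {z. peq (evalm ?g z) x}" using nd(2) by auto
  then have pa: "peq (evalm ?g a) x" and pb: "peq (evalm ?g b) x" by auto
  have "peq (evalm ?g a) (evalm ?g b)" using pa pb peq_sym peq_trans by blast
  then obtain c where c: "c \<noteq> 0" "\<forall>j<4. evalm ?g a j = c * evalm ?g b j" unfolding peq_def by blast
  define \<rho> where "\<rho> = csqrt (csqrt c)"
  have \<rho>4: "\<rho>^4 = c" unfolding \<rho>_def by (rule csqrt4)
  have \<rho>nz: "\<rho> \<noteq> 0" using \<rho>4 c(1) by auto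
  obtain au av where la: "lift1 a = (au, av)" by force
  obtain bu bv where lb: "lift1 b = (bu, bv)" by force
  have dab: "bu * av - au * bv \<noteq> 0" using nd(1) la lb by (cases a; cases b) auto
  define m11 where "m11 = \<rho> * bu"
  define m12 where "m12 = au"
  define m21 where "m21 = \<rho> * bv"
  define m22 where "m22 = av"
  have "m11 * m22 - m12 * m21 = \<rho> * (bu * av - au * bv)"
    by (simp add: m11_def m12_def m21_def m22_def algebra_simps)
  then have det: "m11 * m22 - m12 * m21 \<noteq> 0" using \<rho>nz dab by simp
  define \<phi> where "\<phi> = phiM p q r s m11 m12 m21 m22"
  have m4: "fst \<phi> = 4" by (simp add: \<phi>_def phiM_def)
  have ev0: "evalm \<phi> (Some 0) = evalm ?g a"
    by (rule ext) (simp add: \<phi>_def phi_eval gam_eval la m12_def m22_def)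
  have evN: "evalm \<phi> None j = evalm \<phi> (Some 0) j" if "j < 4" for j
  proof -
    have "evalm \<phi> None j = Gf p q r s j (\<rho> * bu) (\<rho> * bv)"
      by (simp add: \<phi>_def phi_eval m11_def m21_def)
    also have "\<dots> = c * evalm ?g b j" by (simp add: Gf_hom \<rho>4 gam_eval lb)
    also have "\<dots> = evalm ?g a j" using c(2) that by simp
    finally show ?thesis using ev0 by simp
  qed
  have nrm: "\<forall>j<4. coeff (snd \<phi> j) 0 = coeff (snd \<phi> j) 4"
    using evN eval_Some0[OF m4] eval_None[OF m4] by metis
  have ind: "\<forall>a. (\<forall>i\<le>4. (\<Sum>j<4. a j * coeff (snd \<phi> j) i) = 0) \<longrightarrow> (\<forall>j<4. a j = 0)"
    unfolding \<phi>_def by (rule phi_indep[OF A1 det])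
  have param: "is_param (curve_img ?g) \<phi>"
    unfolding is_param_def
  proof (intro conjI)
    show "is_bmap \<phi>" unfolding \<phi>_def by (rule phi_bmap(1)[OF A1 det])
    show "curve_img \<phi> = curve_img ?g" unfolding \<phi>_def by (rule phi_bmap(2)[OF A1 det])
    show "\<exists>F. finite F \<and> (\<forall>z w. z \<notin> F \<and> w \<notin> F \<and> peq (evalm \<phi> z) (evalm \<phi> w) \<longrightarrow> z = w)"
    proof (intro exI[of _ "{Some 0, None}"] conjI allI impI)
      fix z w assume H: "z \<notin> {Some 0, None} \<and> w \<notin> {Some 0, None} \<and> peq (evalm \<phi> z) (evalm \<phi> w)"
      then obtain t t' where "z = Some t" "w = Some t'" "t \<noteq> 0" "t' \<noteq> 0" by (cases z; cases w) auto
      then show "z = w" using node_inj[OF m4 nrm ind] H by auto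
    qed simp
  qed
  have pn: "peq (evalm \<phi> (Some 0)) (evalm \<phi> None)"
    by (rule peq_scale[of 1]) (use evN in simp_all)
  have "{z. peq (evalm ?g z) (evalm ?g a)} = {z. peq (evalm ?g z) x}"
    using pa peq_sym peq_trans by blast
  then have isn: "is_node ?g (evalm \<phi> (Some 0))"
    unfolding ev0 is_node_def using nd by blast
  have cop: "\<forall>t1 t2 t3 t4. distinct [t1, t2, t3, t4] \<and>
                  (\<forall>t\<in>{t1, t2, t3, t4}. \<not> peq (evalm \<phi> (Some t)) (evalm \<phi> (Some 0))) \<longrightarrow>
                  (coplanar4 (evalm \<phi> (Some t1)) (evalm \<phi> (Some t2))
                             (evalm \<phi> (Some t3)) (evalm \<phi> (Some t4))
                   \<longleftrightarrow> t1 * t2 * t3 * t4 = 1)"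
  proof (intro allI impI)
    fix t1 t2 t3 t4 :: complex
    assume H: "distinct [t1, t2, t3, t4] \<and>
                  (\<forall>t\<in>{t1, t2, t3, t4}. \<not> peq (evalm \<phi> (Some t)) (evalm \<phi> (Some 0)))"
    then have "t1 \<noteq> 0" "t2 \<noteq> 0" "t3 \<noteq> 0" "t4 \<noteq> 0" using peq_refl by blast+
    then show "coplanar4 (evalm \<phi> (Some t1)) (evalm \<phi> (Some t2))
                             (evalm \<phi> (Some t3)) (evalm \<phi> (Some t4))
                   \<longleftrightarrow> t1 * t2 * t3 * t4 = 1"
      using node_cop[OF m4 nrm ind] H by blast
  qed
  show ?thesis using param pn isn cop by blast
qed

lemma cusp_coeff3:
  assumes ts: "t + s \<noteq> 0"
    and P: "p = - ((4 * s + 3 * t) * t^3)" and Q: "q = 3 * s * t^2 + 2 * t^3" and R: "r = - 2 * s * t - t^2"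
    and sg: "\<sigma> = - 1 / (4 * (t + s))"
  shows "\<forall>j<4. coeff (snd (phiM p q r s t (t * \<sigma> + 1) 1 \<sigma>) j) 3 = 0"
proof (intro allI impI)
  fix j :: nat assume "j < 4"
  have D: "4 * (t + s) \<noteq> 0" using ts by (metis mult_eq_0_iff zero_neq_numeral)
  have sD: "\<sigma> * (4 * (t + s)) = -1" unfolding sg using D by (simp del: distrib_left_numeral)
  have "1 + 4 * \<sigma> * (t + s) = 1 + \<sigma> * (4 * (t + s))" by (simp only: ac_simps)
  also have "\<dots> = 0" by (simp only: sD) simp
  finally have z: "1 + 4 * \<sigma> * (t + s) = 0" .
  from \<open>j < 4\<close> have "j = 0 \<or> j = 1 \<or> j = 2 \<or> j = 3" by auto
  moreover have "coeff (snd (phiM p q r s t (t * \<sigma> + 1) 1 \<sigma>) 0) 3 = 4 * t^3 * (1 + 4 * \<sigma> * (t + s))"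
    by (simp add: phiM_def eval_nat_numeral P algebra_simps)
  moreover have "coeff (snd (phiM p q r s t (t * \<sigma> + 1) 1 \<sigma>) 1) 3 = 3 * t^2 * (1 + 4 * \<sigma> * (t + s))"
    by (simp add: phiM_def eval_nat_numeral Q algebra_simps)
  moreover have "coeff (snd (phiM p q r s t (t * \<sigma> + 1) 1 \<sigma>) 2) 3 = 2 * t * (1 + 4 * \<sigma> * (t + s))"
    by (simp add: phiM_def eval_nat_numeral R algebra_simps)
  moreover have "coeff (snd (phiM p q r s t (t * \<sigma> + 1) 1 \<sigma>) 3) 3 = 1 + 4 * \<sigma> * (t + s)"
    by (simp add: phiM_def eval_nat_numeral algebra_simps)
  ultimately show "coeff (snd (phiM p q r s t (t * \<sigma> + 1) 1 \<sigma>) j) 3 = 0" using z by auto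
qed

lemma cusp_part:
  fixes p q r s :: complex
  assumes A1: "r \<noteq> s ^ 2 \<or> q \<noteq> s ^ 3 \<or> p \<noteq> s ^ 4"
    and ex: "\<exists>x. is_cusp (gam p q r s) x"
  shows "\<exists>\<phi>. is_param (curve_img (gam p q r s)) \<phi> \<and>
               is_cusp (gam p q r s) (evalm \<phi> None) \<and>
               (\<forall>t1 t2 t3 t4. distinct [t1, t2, t3, t4] \<and>
                  (\<forall>t\<in>{t1, t2, t3, t4}. \<not> peq (evalm \<phi> (Some t)) (evalm \<phi> None)) \<longrightarrow>
                  (coplanar4 (evalm \<phi> (Some t1)) (evalm \<phi> (Some t2))
                             (evalm \<phi> (Some t3)) (evalm \<phi> (Some t4))
                   \<longleftrightarrow> t1 + t2 + t3 + t4 = 0))"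
proof -
  let ?g = "gam p q r s"
  obtain x a where cu: "{z. peq (evalm ?g z) x} = {a}" "\<not> unram ?g a"
    using ex unfolding is_cusp_def by blast
  have "a \<in> {z. peq (evalm ?g z) x}" using cu(1) by auto
  then have pa: "peq (evalm ?g a) x" by auto
  obtain t0 where a: "a = Some t0" using cu(2) unram_None by (cases a) auto
  have rel: "p = - ((4 * s + 3 * t0) * t0^3)" "q = 3 * s * t0^2 + 2 * t0^3" "r = - 2 * s * t0 - t0^2"
    using cusp_rel[of p q r s t0] cu(2) a by auto
  have ts: "t0 + s \<noteq> 0"
  proof
    assume "t0 + s = 0"
    then have "t0 = - s" by (simp add: add_eq_0_iff2)
    then have "p = s^4" "q = s^3" "r = s^2" using rel by (simp_all add: eval_nat_numeral algebra_simps)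
    then show False using A1 by simp
  qed
  define \<sigma> where "\<sigma> = - 1 / (4 * (t0 + s))"
  have det: "t0 * \<sigma> - (t0 * \<sigma> + 1) * 1 \<noteq> 0" by simp
  define \<phi> where "\<phi> = phiM p q r s t0 (t0 * \<sigma> + 1) 1 \<sigma>"
  have m4: "fst \<phi> = 4" by (simp add: \<phi>_def phiM_def)
  have evN: "evalm \<phi> None = evalm ?g a"
    by (rule ext) (simp add: \<phi>_def phi_eval gam_eval a)
  have nrm: "\<forall>j<4. coeff (snd \<phi> j) 3 = 0"
    unfolding \<phi>_def by (rule cusp_coeff3[OF ts rel \<sigma>_def])
  have ind: "\<forall>a. (\<forall>i\<le>4. (\<Sum>j<4. a j * coeff (snd \<phi> j) i) = 0) \<longrightarrow> (\<forall>j<4. a j = 0)"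
    unfolding \<phi>_def by (rule phi_indep[OF A1 det])
  have param: "is_param (curve_img ?g) \<phi>"
    unfolding is_param_def
  proof (intro conjI)
    show "is_bmap \<phi>" unfolding \<phi>_def by (rule phi_bmap(1)[OF A1 det])
    show "curve_img \<phi> = curve_img ?g" unfolding \<phi>_def by (rule phi_bmap(2)[OF A1 det])
    show "\<exists>F. finite F \<and> (\<forall>z w. z \<notin> F \<and> w \<notin> F \<and> peq (evalm \<phi> z) (evalm \<phi> w) \<longrightarrow> z = w)"
    proof (intro exI[of _ "{None}"] conjI allI impI)
      fix z w assume H: "z \<notin> {None} \<and> w \<notin> {None} \<and> peq (evalm \<phi> z) (evalm \<phi> w)"
      then obtain t t' where "z = Some t" "w = Some t'" by (cases z; cases w) auto
      then show "z = w" using cusp_inj[OF m4 nrm ind] H by auto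
    qed simp
  qed
  have "{z. peq (evalm ?g z) (evalm ?g a)} = {z. peq (evalm ?g z) x}"
    using pa peq_sym peq_trans by blast
  then have isc: "is_cusp ?g (evalm \<phi> None)"
    unfolding evN is_cusp_def using cu by blast
  have cop: "\<forall>t1 t2 t3 t4. distinct [t1, t2, t3, t4] \<and>
                  (\<forall>t\<in>{t1, t2, t3, t4}. \<not> peq (evalm \<phi> (Some t)) (evalm \<phi> None)) \<longrightarrow>
                  (coplanar4 (evalm \<phi> (Some t1)) (evalm \<phi> (Some t2))
                             (evalm \<phi> (Some t3)) (evalm \<phi> (Some t4))
                   \<longleftrightarrow> t1 + t2 + t3 + t4 = 0)"
    using cusp_cop[OF m4 nrm ind] by blast
  show ?thesis using param isc cop by blast
qed

theorem lemma5p2: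
  fixes p q r s :: complex
  assumes "r \<noteq> s ^ 2 \<or> q \<noteq> s ^ 3 \<or> p \<noteq> s ^ 4"
    and "first_species (curve_img (gam p q r s))"
  shows "((\<exists>x. is_node (gam p q r s) x) \<longrightarrow>
            (\<exists>\<phi>. is_param (curve_img (gam p q r s)) \<phi> \<and>
               peq (evalm \<phi> (Some 0)) (evalm \<phi> None) \<and>
               is_node (gam p q r s) (evalm \<phi> (Some 0)) \<and>
               (\<forall>t1 t2 t3 t4. distinct [t1, t2, t3, t4] \<and>
                  (\<forall>t\<in>{t1, t2, t3, t4}. \<not> peq (evalm \<phi> (Some t)) (evalm \<phi> (Some 0))) \<longrightarrow>
                  (coplanar4 (evalm \<phi> (Some t1)) (evalm \<phi> (Some t2))
                             (evalm \<phi> (Some t3)) (evalm \<phi> (Some t4))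
                   \<longleftrightarrow> t1 * t2 * t3 * t4 = 1))))
       \<and> ((\<exists>x. is_cusp (gam p q r s) x) \<longrightarrow>
            (\<exists>\<phi>. is_param (curve_img (gam p q r s)) \<phi> \<and>
               is_cusp (gam p q r s) (evalm \<phi> None) \<and>
               (\<forall>t1 t2 t3 t4. distinct [t1, t2, t3, t4] \<and>
                  (\<forall>t\<in>{t1, t2, t3, t4}. \<not> peq (evalm \<phi> (Some t)) (evalm \<phi> None)) \<longrightarrow>
                  (coplanar4 (evalm \<phi> (Some t1)) (evalm \<phi> (Some t2))
                             (evalm \<phi> (Some t3)) (evalm \<phi> (Some t4))
                   \<longleftrightarrow> t1 + t2 + t3 + t4 = 0))))"
  using node_part[OF assms(1)] cusp_part[OF assms(1)] by blast

end
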